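(* For every positive integer $m$, there is no $(2^{2m},m,p)$-QRA coding with $p>1/2$. That is, there do not exist $p>1/2$, $m$-qubit states $\rho_x$ for $x\in\{0,1\}^{2^{2m}}$, and POVMs $\{E^i_0,E^i_1\}$ on $\mathbb{C}^{2^m}$ for $i\in\{1,\dots,2^{2m}\}$ with $\mathrm{Tr}(E^i_{x_i}\rho_x)\ge p$ for all $x$ and all $i$.
   Context: An $(n,m,p)$-quantum random access (QRA) coding is a map assigning to each $n$-bit string $x\in\{0,1\}^n$ an $m$-qubit state $\rho_x$ (a positive semidefinite trace-one operator on $\mathbb{C}^{2^m}$) such that for every $i\in\{1,\dots,n\}$ there is a POVM $E^i=\{E^i_0,E^i_1\}$ (i.e. $E^i_0,E^i_1$ are positive semidefinite Hermitian operators on $\mathbb{C}^{2^m}$ with $E^i_0+E^i_1=I$) satisfying $\mathrm{Tr}(E^i_{x_i}\rho_x)\ge p$ for all $x\in\{0,1\}^n$, where $x_i$ is the $i$-th bit of $x$. *)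

theory Defs
  imports "Jordan_Normal_Form.Matrix" "Jordan_Normal_Form.Conjugate"
begin

definition mtrace :: "complex mat \<Rightarrow> complex" where
  "mtrace A = (\<Sum>i<dim_row A. A $$ (i, i))"

definition hermitian_mat :: "nat \<Rightarrow> complex mat \<Rightarrow> bool" where
  "hermitian_mat d A \<longleftrightarrow> A \<in> carrier_mat d d \<and>
     (\<forall>i<d. \<forall>j<d. A $$ (i, j) = cnj (A $$ (j, i)))"

definition psd_mat :: "nat \<Rightarrow> complex mat \<Rightarrow> bool" where
  "psd_mat d A \<longleftrightarrow> hermitian_mat d A \<and>
     (\<forall>v \<in> carrier_vec d. 0 \<le> Re (conjugate v \<bullet> (A *\<^sub>v v)))"

definition qstate :: "nat \<Rightarrow> complex mat \<Rightarrow> bool" where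
  "qstate m \<rho> \<longleftrightarrow> psd_mat (2 ^ m) \<rho> \<and> mtrace \<rho> = 1"

text \<open>Two-outcome POVM on C^(2^m); outcomes indexed by bool (False = 0, True = 1).\<close>
definition povm2 :: "nat \<Rightarrow> (bool \<Rightarrow> complex mat) \<Rightarrow> bool" where
  "povm2 m E \<longleftrightarrow> psd_mat (2 ^ m) (E False) \<and> psd_mat (2 ^ m) (E True) \<and>
     E False + E True = 1\<^sub>m (2 ^ m)"

text \<open>(n,m,p)-QRA coding. Bit strings x in {0,1}^n are boolean lists of length n,
  the i-th bit (i = 1..n) being x ! (i-1); indices are 0-based here.\<close>
definition qra_coding :: "nat \<Rightarrow> nat \<Rightarrow> real \<Rightarrow> bool" where
  "qra_coding n m p \<longleftrightarrow>
     (\<exists>\<rho> :: bool list \<Rightarrow> complex mat. \<exists>E :: nat \<Rightarrow> bool \<Rightarrow> complex mat.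
        (\<forall>x. length x = n \<longrightarrow> qstate m (\<rho> x)) \<and>
        (\<forall>i<n. povm2 m (E i)) \<and>
        (\<forall>x i. length x = n \<longrightarrow> i < n \<longrightarrow> Re (mtrace (E i (x ! i) * \<rho> x)) \<ge> p))"

end

theory Submission imports Defs begin

lemma lin_dep:
  fixes v :: "nat \<Rightarrow> nat \<Rightarrow> 'a::field"
  assumes "finite I" "k < card I"
  shows "\<exists>c. (\<exists>i\<in>I. c i \<noteq> 0) \<and> (\<forall>r<k. (\<Sum>i\<in>I. c i * v i r) = 0)"
  using assms
proof (induction k arbitrary: I v)
  case 0
  then obtain i where "i \<in> I" by (metis card.empty ex_in_conv less_nat_zero_code)
  then show ?case by (intro exI[of _ "\<lambda>_. 1"]) auto
next
  case (Suc k)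
  show ?case
  proof (cases "\<forall>i\<in>I. v i k = 0")
    case True
    from Suc.IH[of I v] Suc.prems obtain c where c: "\<exists>i\<in>I. c i \<noteq> 0" "\<forall>r<k. (\<Sum>i\<in>I. c i * v i r) = 0" by auto
    have "\<forall>r<Suc k. (\<Sum>i\<in>I. c i * v i r) = 0"
      using c(2) True by (auto simp: less_Suc_eq)
    then show ?thesis using c(1) by blast
  next
    case False
    then obtain j where j: "j \<in> I" "v j k \<noteq> 0" by auto
    define I' where "I' = I - {j}"
    define w where "w i r = v i r - v i k / v j k * v j r" for i r
    have fin: "finite I'" using Suc.prems I'_def by auto
    have cI': "k < card I'" using Suc.prems j I'_def by auto
    from Suc.IH[OF fin cI', of w] obtain c where c: "\<exists>i\<in>I'. c i \<noteq> 0" "\<forall>r<k. (\<Sum>i\<in>I'. c i * w i r) = 0" by auto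
    define c' where "c' i = (if i = j then - (\<Sum>l\<in>I'. c l * v l k) / v j k else c i)" for i
    have split: "(\<Sum>i\<in>I. c' i * v i r) = c' j * v j r + (\<Sum>i\<in>I'. c i * v i r)" for r
    proof -
      have "(\<Sum>i\<in>I. c' i * v i r) = c' j * v j r + (\<Sum>i\<in>I'. c' i * v i r)"
        using Suc.prems(1) j(1) I'_def by (simp add: sum.remove)
      moreover have "(\<Sum>i\<in>I'. c' i * v i r) = (\<Sum>i\<in>I'. c i * v i r)"
        by (rule sum.cong) (auto simp: c'_def I'_def)
      ultimately show ?thesis by simp
    qed
    have "\<forall>r<Suc k. (\<Sum>i\<in>I. c' i * v i r) = 0"
    proof (intro allI impI)
      fix r assume r: "r < Suc k"
      show "(\<Sum>i\<in>I. c' i * v i r) = 0"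
      proof (cases "r = k")
        case True
        have "c' j * v j k + (\<Sum>i\<in>I'. c i * v i k) = 0" using j(2) by (simp add: c'_def)
        then show ?thesis using True split[of r] by simp
      next
        case False
        then have "r < k" using r by simp
        have "(\<Sum>i\<in>I'. c i * w i r) = (\<Sum>i\<in>I'. c i * v i r) - (\<Sum>i\<in>I'. c i * v i k) / v j k * v j r"
          by (simp add: w_def right_diff_distrib sum_subtractf sum_distrib_right sum_divide_distrib mult.assoc)
        then have "c' j * v j r + (\<Sum>i\<in>I'. c i * v i r) = 0" using c(2) \<open>r < k\<close> by (simp add: c'_def)
        then show ?thesis using split[of r] by simp
      qed
    qed
    moreover have "\<exists>i\<in>I. c' i \<noteq> 0" using c(1) by (auto simp: c'_def I'_def)
    ultimately show ?thesis by blast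
  qed
qed

lemma sign_contra:
  fixes r :: "nat \<Rightarrow> real" and s :: "bool list \<Rightarrow> nat \<Rightarrow> real"
  assumes nz: "\<exists>i<n. r i \<noteq> 0"
    and sg: "\<And>x i. length x = n \<Longrightarrow> i < n \<Longrightarrow> (x!i \<longrightarrow> s x i > 0) \<and> (\<not> x!i \<longrightarrow> s x i < 0)"
    and eq: "\<And>x. length x = n \<Longrightarrow> (\<Sum>i<n. r i * s x i) = C"
  shows False
proof (cases "C \<ge> 0")
  case True
  define x where "x = map (\<lambda>i. r i < 0) [0..<n]"
  have lx: "length x = n" by (simp add: x_def)
  have le: "r i * s x i \<le> 0" if "i < n" for i
    using sg[OF lx that] that by (auto simp: x_def mult_nonneg_nonpos mult_nonpos_nonneg less_imp_le)
  obtain j where j: "j < n" "r j \<noteq> 0" using nz by auto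
  have lt: "r j * s x j < 0"
    using sg[OF lx j(1)] j by (auto simp: x_def mult_pos_neg mult_neg_pos)
  have "(\<Sum>i<n. r i * s x i) < 0"
  proof -
    have "(\<Sum>i<n. r i * s x i) = r j * s x j + (\<Sum>i\<in>{..<n}-{j}. r i * s x i)"
      using j(1) by (simp add: sum.remove)
    moreover have "(\<Sum>i\<in>{..<n}-{j}. r i * s x i) \<le> 0"
      by (rule sum_nonpos) (use le in auto)
    ultimately show ?thesis using lt by linarith
  qed
  then show False using eq[OF lx] True by simp
next
  case False
  define x where "x = map (\<lambda>i. r i > 0) [0..<n]"
  have lx: "length x = n" by (simp add: x_def)
  have le: "r i * s x i \<ge> 0" if "i < n" for i
    using sg[OF lx that] that by (auto simp: x_def mult_nonpos_nonpos less_imp_le)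
  then have "(\<Sum>i<n. r i * s x i) \<ge> 0" by (intro sum_nonneg) auto
  then show False using eq[OF lx] False by simp
qed

lemma tr_formula:
  assumes "M \<in> carrier_mat d d" "R \<in> carrier_mat d d"
  shows "mtrace (M * R) = (\<Sum>a<d. \<Sum>b<d. M $$ (a,b) * R $$ (b,a))"
  using assms by (auto simp: mtrace_def scalar_prod_def atLeast0LessThan intro!: sum.cong)

lemma herm_real_comb:
  fixes M :: "nat \<Rightarrow> complex mat" and c :: "nat \<Rightarrow> complex"
  assumes herm: "\<And>i a b. i \<in> I \<Longrightarrow> a < d \<Longrightarrow> b < d \<Longrightarrow> M i $$ (a,b) = cnj (M i $$ (b,a))"
    and nz: "\<exists>i\<in>I. c i \<noteq> 0"
    and z: "\<And>a b. a < d \<Longrightarrow> b < d \<Longrightarrow> (\<Sum>i\<in>I. c i * M i $$ (a,b)) = 0"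
  shows "\<exists>r::nat\<Rightarrow>real. (\<exists>i\<in>I. r i \<noteq> 0) \<and> (\<forall>a<d. \<forall>b<d. (\<Sum>i\<in>I. complex_of_real (r i) * M i $$ (a,b)) = 0)"
proof -
  have z2: "(\<Sum>i\<in>I. cnj (c i) * M i $$ (a,b)) = 0" if "a < d" "b < d" for a b
  proof -
    have "cnj (\<Sum>i\<in>I. c i * M i $$ (b,a)) = 0" using z[OF that(2,1)] by simp
    then have "(\<Sum>i\<in>I. cnj (c i) * cnj (M i $$ (b,a))) = 0" by (simp add: cnj_sum)
    moreover have "(\<Sum>i\<in>I. cnj (c i) * cnj (M i $$ (b,a))) = (\<Sum>i\<in>I. cnj (c i) * M i $$ (a,b))"
      by (rule sum.cong) (simp_all add: herm[OF _ that])
    ultimately show ?thesis by simp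
  qed
  show ?thesis
  proof (cases "\<exists>i\<in>I. Re (c i) \<noteq> 0")
    case True
    show ?thesis
    proof (intro exI[of _ "\<lambda>i. 2 * Re (c i)"] conjI allI impI)
      show "\<exists>i\<in>I. 2 * Re (c i) \<noteq> 0" using True by auto
      fix a b assume ab: "a < d" "b < d"
      have "(\<Sum>i\<in>I. c i * M i $$ (a,b)) + (\<Sum>i\<in>I. cnj (c i) * M i $$ (a,b))
          = (\<Sum>i\<in>I. (c i + cnj (c i)) * M i $$ (a,b))"
        by (simp add: distrib_right sum.distrib)
      also have "\<dots> = (\<Sum>i\<in>I. complex_of_real (2 * Re (c i)) * M i $$ (a,b))"
        by (simp only: complex_add_cnj)
      finally have "(\<Sum>i\<in>I. complex_of_real (2 * Re (c i)) * M i $$ (a,b))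
          = (\<Sum>i\<in>I. c i * M i $$ (a,b)) + (\<Sum>i\<in>I. cnj (c i) * M i $$ (a,b))" by simp
      then show "(\<Sum>i\<in>I. complex_of_real (2 * Re (c i)) * M i $$ (a,b)) = 0"
        using z[OF ab] z2[OF ab] by simp
    qed
  next
    case False
    then have "\<exists>i\<in>I. Im (c i) \<noteq> 0" using nz complex_eq_iff by force
    show ?thesis
    proof (intro exI[of _ "\<lambda>i. 2 * Im (c i)"] conjI allI impI)
      show "\<exists>i\<in>I. 2 * Im (c i) \<noteq> 0" using \<open>\<exists>i\<in>I. Im (c i) \<noteq> 0\<close> by auto
      fix a b assume ab: "a < d" "b < d"
      have "(\<Sum>i\<in>I. c i * M i $$ (a,b)) - (\<Sum>i\<in>I. cnj (c i) * M i $$ (a,b))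
          = (\<Sum>i\<in>I. (c i - cnj (c i)) * M i $$ (a,b))"
        by (simp add: left_diff_distrib sum_subtractf)
      also have "\<dots> = (\<Sum>i\<in>I. complex_of_real (2 * Im (c i)) * \<i> * M i $$ (a,b))"
        by (simp only: complex_diff_cnj)
      also have "\<dots> = (\<Sum>i\<in>I. complex_of_real (2 * Im (c i)) * M i $$ (a,b)) * \<i>"
        unfolding sum_distrib_right by (rule sum.cong) (simp_all add: mult_ac)
      finally have "(\<Sum>i\<in>I. complex_of_real (2 * Im (c i)) * M i $$ (a,b)) * \<i>
          = (\<Sum>i\<in>I. c i * M i $$ (a,b)) - (\<Sum>i\<in>I. cnj (c i) * M i $$ (a,b))" by simp
      then show "(\<Sum>i\<in>I. complex_of_real (2 * Im (c i)) * M i $$ (a,b)) = 0"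
        using z[OF ab] z2[OF ab] by simp
    qed
  qed
qed

theorem theorem2:
  fixes m :: nat
  assumes "m \<ge> 1"
  shows "\<not> (\<exists>p :: real. p > 1 / 2 \<and> qra_coding (2 ^ (2 * m)) m p)"
proof
  assume "\<exists>p :: real. p > 1 / 2 \<and> qra_coding (2 ^ (2 * m)) m p"
  then obtain p :: real where p: "p > 1/2" and q: "qra_coding (2 ^ (2 * m)) m p" by blast
  define n :: nat where "n = 2 ^ (2 * m)"
  define d :: nat where "d = 2 ^ m"
  have nd: "n = d * d" unfolding n_def d_def by (simp add: power_mult_distrib[symmetric] mult_2 power_add)
  have d0: "d > 0" by (simp add: d_def)
  from q obtain \<rho> :: "bool list \<Rightarrow> complex mat" and E :: "nat \<Rightarrow> bool \<Rightarrow> complex mat" where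
    st: "\<And>x. length x = n \<Longrightarrow> qstate m (\<rho> x)" and
    pv: "\<And>i. i < n \<Longrightarrow> povm2 m (E i)" and
    pr: "\<And>x i. length x = n \<Longrightarrow> i < n \<Longrightarrow> Re (mtrace (E i (x ! i) * \<rho> x)) \<ge> p"
    unfolding qra_coding_def n_def by blast
  define M where "M i = (if i < n then E i True else 1\<^sub>m d)" for i
  have EH: "hermitian_mat d (E i b)" if "i < n" for i b
    using pv[OF that] unfolding povm2_def psd_mat_def d_def by (cases b) auto
  have MH: "hermitian_mat d (M i)" if "i \<le> n" for i
  proof (cases "i < n")
    case True then show ?thesis using EH[OF True, of True] by (simp add: M_def)
  next
    case False then show ?thesis by (simp add: M_def hermitian_mat_def)
  qed
  have Mc: "M i \<in> carrier_mat d d" if "i \<le> n" for i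
    using MH[OF that] unfolding hermitian_mat_def by blast
  have Mh: "M i $$ (a,b) = cnj (M i $$ (b,a))" if "i \<in> {..n}" "a < d" "b < d" for i a b
  proof -
    have "i \<le> n" using that(1) by simp
    then show ?thesis using MH[of i] that(2,3) unfolding hermitian_mat_def by blast
  qed
  obtain c :: "nat \<Rightarrow> complex" where c: "\<exists>i\<in>{..n}. c i \<noteq> 0"
     "\<forall>r<d*d. (\<Sum>i\<in>{..n}. c i * (\<lambda>i r. M i $$ (r div d, r mod d)) i r) = 0"
    using lin_dep[of "{..n}" "d*d" "\<lambda>i r. M i $$ (r div d, r mod d)"] nd by auto
  have cz: "(\<Sum>i\<in>{..n}. c i * M i $$ (a,b)) = 0" if "a < d" "b < d" for a b
  proof -
    have "a * d + b < a * d + d" using that by simp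
    also have "\<dots> = (a + 1) * d" by simp
    also have "\<dots> \<le> d * d" using that by (intro mult_right_mono) auto
    finally have lt: "a * d + b < d * d" .
    have dm: "(a * d + b) div d = a" "(a * d + b) mod d = b" using that by auto
    have "(\<Sum>i\<in>{..n}. c i * M i $$ ((a * d + b) div d, (a * d + b) mod d)) = 0"
      using c(2) lt by blast
    then show ?thesis unfolding dm .
  qed
  obtain r :: "nat \<Rightarrow> real" where r: "\<exists>i\<in>{..n}. r i \<noteq> 0"
    "\<forall>a<d. \<forall>b<d. (\<Sum>i\<in>{..n}. complex_of_real (r i) * M i $$ (a,b)) = 0"
    using herm_real_comb[of "{..n}" d M c, OF Mh c(1) cz] by blast
  have rnz: "\<exists>i<n. r i \<noteq> 0"
  proof (rule ccontr)
    assume "\<not> (\<exists>i<n. r i \<noteq> 0)"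
    then have z: "\<And>i. i < n \<Longrightarrow> r i = 0" by auto
    then have rn: "r n \<noteq> 0" using r(1) by (metis atMost_iff le_neq_implies_less)
    have "(\<Sum>i\<in>{..n}. complex_of_real (r i) * M i $$ (0,0)) = complex_of_real (r n) * M n $$ (0,0)"
      by (simp add: lessThan_Suc_atMost[symmetric] z)
    also have "\<dots> = complex_of_real (r n)" using d0 by (simp add: M_def)
    finally show False using r(2) d0 rn by auto
  qed
  have key: "(\<Sum>i<n. r i * Re (mtrace (E i True * \<rho> x))) + r n = 0" if lx: "length x = n" for x
  proof -
    have \<rho>c: "\<rho> x \<in> carrier_mat d d" and tr1: "mtrace (\<rho> x) = 1"
      using st[OF lx] unfolding qstate_def psd_mat_def hermitian_mat_def d_def by blast+
    have "(\<Sum>i\<in>{..n}. complex_of_real (r i) * mtrace (M i * \<rho> x))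
        = (\<Sum>i\<in>{..n}. \<Sum>a<d. \<Sum>b<d. complex_of_real (r i) * M i $$ (a,b) * \<rho> x $$ (b,a))"
      by (rule sum.cong) (auto simp: tr_formula[OF Mc \<rho>c] sum_distrib_left mult.assoc)
    also have "\<dots> = (\<Sum>a<d. \<Sum>b<d. (\<Sum>i\<in>{..n}. complex_of_real (r i) * M i $$ (a,b)) * \<rho> x $$ (b,a))"
      by (simp add: sum_distrib_right sum.swap[of _ "{..n}"])
    also have "\<dots> = 0" using r(2) by simp
    finally have s0: "(\<Sum>i\<in>{..n}. complex_of_real (r i) * mtrace (M i * \<rho> x)) = 0" .
    have "mtrace (M n * \<rho> x) = 1" using \<rho>c tr1 by (simp add: M_def)
    then have "(\<Sum>i<n. complex_of_real (r i) * mtrace (E i True * \<rho> x)) + complex_of_real (r n) = 0"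
      using s0 by (simp add: lessThan_Suc_atMost[symmetric] M_def)
    then have "Re ((\<Sum>i<n. complex_of_real (r i) * mtrace (E i True * \<rho> x)) + complex_of_real (r n)) = 0"
      by simp
    then show ?thesis by (simp add: Re_sum)
  qed
  define s where "s x i = Re (mtrace (E i True * \<rho> x)) - 1/2" for x i
  have sg: "(x!i \<longrightarrow> s x i > 0) \<and> (\<not> x!i \<longrightarrow> s x i < 0)" if lx: "length x = n" and i: "i < n" for x i
  proof -
    have \<rho>c: "\<rho> x \<in> carrier_mat d d" and tr1: "mtrace (\<rho> x) = 1"
      using st[OF lx] unfolding qstate_def psd_mat_def hermitian_mat_def d_def by blast+
    have EF: "E i False \<in> carrier_mat d d" and ET: "E i True \<in> carrier_mat d d"
      and Esum: "E i False + E i True = 1\<^sub>m d"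
      using pv[OF i] unfolding povm2_def psd_mat_def hermitian_mat_def d_def by blast+
    have "mtrace (E i False * \<rho> x) + mtrace (E i True * \<rho> x)
        = (\<Sum>a<d. \<Sum>b<d. (E i False + E i True) $$ (a,b) * \<rho> x $$ (b,a))"
      using EF ET by (simp add: tr_formula[OF EF \<rho>c] tr_formula[OF ET \<rho>c] sum.distrib[symmetric] distrib_right)
    also have "\<dots> = mtrace (1\<^sub>m d * \<rho> x)" using Esum by (simp add: tr_formula[OF _ \<rho>c])
    also have "\<dots> = 1" using \<rho>c tr1 by simp
    finally have "Re (mtrace (E i False * \<rho> x)) + Re (mtrace (E i True * \<rho> x)) = 1"
      by (metis one_complex.simps(1) plus_complex.simps(1))
    then show ?thesis using pr[OF lx i] p by (cases "x!i") (auto simp: s_def)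
  qed
  have eq: "(\<Sum>i<n. r i * s x i) = - r n - (\<Sum>i<n. r i) / 2" if lx: "length x = n" for x
  proof -
    have "(\<Sum>i<n. r i * s x i) = (\<Sum>i<n. r i * Re (mtrace (E i True * \<rho> x))) - (\<Sum>i<n. r i) / 2"
      by (simp add: s_def right_diff_distrib sum_subtractf sum_divide_distrib)
    then show ?thesis using key[OF lx] by simp
  qed
  show False using sign_contra[of n r s, OF rnz sg eq] by blast
qed
end
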